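(* Let $\Sigma$ be a fan with $\operatorname{ns}(\Sigma)>0$. Then no two distinct minimal non-simplicial cones of $\Sigma$ are both contained in a single cone of $\Sigma$.
   Context: For a strongly convex rational polyhedral cone $\sigma$, $\sigma(1)$ denotes its set of rays and $\dim\sigma$ the dimension of its linear span; its non-simplicial index is $\operatorname{ns}(\sigma)=|\sigma(1)|-\dim\sigma$. For a fan $\Sigma$, $\operatorname{ns}(\Sigma)=\max_{\sigma\in\Sigma}\operatorname{ns}(\sigma)$. A minimal non-simplicial cone of $\Sigma$ is a cone $\sigma\in\Sigma$ with $\operatorname{ns}(\sigma)=\operatorname{ns}(\Sigma)$ which is minimal with respect to inclusion among cones of $\Sigma$ with this property. *)

theory Defs
  imports "HOL-Analysis.Analysis"
begin

text \<open>Cones live in N_R = R^n (index type 'n), the lattice being Z^n.\<close>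

definition rat_poly_cone :: "(real ^ 'n) set \<Rightarrow> bool" where
  "rat_poly_cone \<sigma> \<longleftrightarrow>
     (\<exists>S. finite S \<and> (\<forall>v\<in>S. \<forall>i. v $ i \<in> \<int>) \<and> \<sigma> = convex_cone hull S)"

definition strongly_convex :: "(real ^ 'n) set \<Rightarrow> bool" where
  "strongly_convex \<sigma> \<longleftrightarrow> \<sigma> \<inter> uminus ` \<sigma> = {0}"

definition sc_rat_poly_cone :: "(real ^ 'n) set \<Rightarrow> bool" where
  "sc_rat_poly_cone \<sigma> \<longleftrightarrow> rat_poly_cone \<sigma> \<and> strongly_convex \<sigma>"

definition cone_face :: "(real ^ 'n) set \<Rightarrow> (real ^ 'n) set \<Rightarrow> bool" where
  "cone_face \<tau> \<sigma> \<longleftrightarrow> \<tau> face_of \<sigma> \<and> \<tau> \<noteq> {}"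

definition rays :: "(real ^ 'n) set \<Rightarrow> (real ^ 'n) set set" where
  "rays \<sigma> = {\<rho>. cone_face \<rho> \<sigma> \<and> dim \<rho> = 1}"

definition ns :: "(real ^ 'n) set \<Rightarrow> int" where
  "ns \<sigma> = int (card (rays \<sigma>)) - int (dim \<sigma>)"

definition fan :: "(real ^ 'n) set set \<Rightarrow> bool" where
  "fan \<Sigma> \<longleftrightarrow> finite \<Sigma> \<and> \<Sigma> \<noteq> {} \<and>
     (\<forall>\<sigma>\<in>\<Sigma>. sc_rat_poly_cone \<sigma>) \<and>
     (\<forall>\<sigma>\<in>\<Sigma>. \<forall>\<tau>. cone_face \<tau> \<sigma> \<longrightarrow> \<tau> \<in> \<Sigma>) \<and>
     (\<forall>\<sigma>\<in>\<Sigma>. \<forall>\<tau>\<in>\<Sigma>. cone_face (\<sigma> \<inter> \<tau>) \<sigma> \<and> cone_face (\<sigma> \<inter> \<tau>) \<tau>)"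

definition ns_fan :: "(real ^ 'n) set set \<Rightarrow> int" where
  "ns_fan \<Sigma> = Max (ns ` \<Sigma>)"

definition minimal_nonsimplicial :: "(real ^ 'n) set set \<Rightarrow> (real ^ 'n) set \<Rightarrow> bool" where
  "minimal_nonsimplicial \<Sigma> \<sigma> \<longleftrightarrow> \<sigma> \<in> \<Sigma> \<and> ns \<sigma> = ns_fan \<Sigma> \<and>
     (\<forall>\<tau>\<in>\<Sigma>. \<tau> \<subset> \<sigma> \<longrightarrow> ns \<tau> \<noteq> ns_fan \<Sigma>)"

end

theory Submission imports Defs begin

lemma cch_single: "convex_cone hull {s::real^'n} = {c *\<^sub>R s | c. c \<ge> 0}"
  by (auto simp: convex_cone_hull_convex_hull_nonempty)

lemma cch_insert:
  "convex_cone hull (insert (s::real^'n) T) = {c *\<^sub>R s + y | c y. c \<ge> 0 \<and> y \<in> convex_cone hull T}"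
  using convex_cone_hull_Un[of "{s}" T] by (auto simp: cch_single)

lemma ray_face:
  fixes s :: "real^'n"
  assumes sc: "strongly_convex (convex_cone hull (insert s T))"
    and ns: "s \<notin> convex_cone hull T"
  shows "(convex_cone hull {s}) face_of (convex_cone hull (insert s T))"
proof -
  let ?P = "convex_cone hull (insert s T)"
  let ?Q = "convex_cone hull T"
  let ?R = "convex_cone hull {s}"
  have QP: "?Q \<subseteq> ?P" by (simp add: hull_mono subset_insertI)
  have neg0: "z = 0" if "z \<in> ?P" "- z \<in> ?P" for z
  proof -
    have "z \<in> uminus ` ?P" using that(2) by (metis image_eqI minus_minus)
    then show ?thesis using sc that(1) unfolding strongly_convex_def by blast
  qed
  show ?thesis unfolding face_of_def
  proof (intro conjI ballI impI)
    show "?R \<subseteq> ?P" by (simp add: hull_mono)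
    show "convex ?R" by (simp add: convex_convex_cone_hull)
    fix a b x assume a: "a \<in> ?P" and b: "b \<in> ?P" and x: "x \<in> ?R" and seg: "x \<in> open_segment a b"
    obtain \<alpha> ya where ya: "\<alpha> \<ge> 0" "ya \<in> ?Q" "a = \<alpha> *\<^sub>R s + ya" using a by (auto simp: cch_insert)
    obtain \<beta> yb where yb: "\<beta> \<ge> 0" "yb \<in> ?Q" "b = \<beta> *\<^sub>R s + yb" using b by (auto simp: cch_insert)
    obtain e where e: "e \<ge> 0" "x = e *\<^sub>R s" using x by (auto simp: cch_single)
    obtain u where u: "0 < u" "u < 1" "x = (1 - u) *\<^sub>R a + u *\<^sub>R b" using seg by (auto simp: in_segment)
    define y where "y = (1 - u) *\<^sub>R ya + u *\<^sub>R yb"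
    define \<gamma> where "\<gamma> = (1 - u) * \<alpha> + u * \<beta>"
    have yQ: "y \<in> ?Q" unfolding y_def using ya yb u
      by (intro convex_cone_hull_add convex_cone_hull_mul) auto
    have eq: "e *\<^sub>R s = \<gamma> *\<^sub>R s + y"
      using u(3) e(2) ya(3) yb(3) by (simp add: y_def \<gamma>_def algebra_simps)
    have "\<not> \<gamma> < e"
    proof
      assume "\<gamma> < e"
      have "(e - \<gamma>) *\<^sub>R s = y" using eq by (simp add: algebra_simps)
      then have "s = (1 / (e - \<gamma>)) *\<^sub>R y" using \<open>\<gamma> < e\<close> by auto
      then have "s \<in> ?Q" using yQ \<open>\<gamma> < e\<close> by (metis convex_cone_hull_mul less_eq_real_def divide_nonneg_nonneg diff_gt_0_iff_gt zero_le_one)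
      then show False using ns by blast
    qed
    then have "- y = (\<gamma> - e) *\<^sub>R s" using eq by (simp add: algebra_simps)
    moreover have "(\<gamma> - e) *\<^sub>R s \<in> ?P" using \<open>\<not> \<gamma> < e\<close>
      by (intro convex_cone_hull_mul) (auto intro: hull_inc)
    ultimately have "y = 0" using neg0 yQ QP by auto
    then have "(1 - u) *\<^sub>R ya = - (u *\<^sub>R yb)" by (simp add: y_def eq_neg_iff_add_eq_0)
    moreover have "(1 - u) *\<^sub>R ya \<in> ?P" "u *\<^sub>R yb \<in> ?P"
      using ya yb u QP by (auto intro!: convex_cone_hull_mul)
    ultimately have "(1 - u) *\<^sub>R ya = 0" "u *\<^sub>R yb = 0" using neg0 by (metis minus_minus)+
    then have "ya = 0" "yb = 0" using u by auto
    then show "a \<in> ?R" "b \<in> ?R" using ya yb by (auto simp: cch_single)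
  qed
qed

lemma cch_sub_span: "convex_cone hull (X::(real^'n) set) \<subseteq> span X"
  by (simp add: hull_minimal span_superset subspace_imp_convex_cone)

lemma dim_cch_single: "(s::real^'n) \<noteq> 0 \<Longrightarrow> dim (convex_cone hull {s}) = 1"
proof -
  assume "s \<noteq> 0"
  have "dim (convex_cone hull {s}) \<le> dim (span {s})" by (rule dim_subset[OF cch_sub_span])
  moreover have "dim {s} \<le> dim (convex_cone hull {s})" by (rule dim_subset) (simp add: hull_inc)
  ultimately show ?thesis using \<open>s \<noteq> 0\<close> by simp
qed

lemma gen_by_rays:
  fixes S :: "(real^'n) set"
  assumes "finite S" "strongly_convex (convex_cone hull S)"
  shows "convex_cone hull S \<subseteq> span (\<Union> (rays (convex_cone hull S)))"
  using assms
proof (induction "card S" arbitrary: S rule: less_induct)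
  case less
  let ?P = "convex_cone hull S"
  show ?case
  proof (cases "\<exists>s\<in>S. s \<in> convex_cone hull (S - {s})")
    case True
    then obtain s where s: "s\<in>S" "s \<in> convex_cone hull (S - {s})" by blast
    have eq: "convex_cone hull (S - {s}) = ?P"
      using hull_redundant[OF s(2)] s(1) by (simp add: insert_absorb)
    have "card (S - {s}) < card S" using s(1) less.prems(1) by (metis card_Diff1_less)
    then show ?thesis using less.hyps[of "S - {s}"] less.prems eq by simp
  next
    case False
    have "S \<subseteq> insert 0 (\<Union> (rays ?P))"
    proof
      fix s assume sS: "s \<in> S"
      show "s \<in> insert 0 (\<Union> (rays ?P))"
      proof (cases "s = 0")
        case False
        have ins: "insert s (S - {s}) = S" using sS by blast
        have "s \<notin> convex_cone hull (S - {s})" using \<open>\<not> (\<exists>s\<in>S. s \<in> convex_cone hull (S - {s}))\<close> sS by blast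
        then have "(convex_cone hull {s}) face_of ?P"
          using ray_face[of s "S - {s}"] less.prems(2) ins by simp
        then have "convex_cone hull {s} \<in> rays ?P"
          unfolding rays_def cone_face_def using dim_cch_single[OF False]
          by (simp add: convex_cone_hull_nonempty)
        moreover have "s \<in> convex_cone hull {s}" by (simp add: hull_inc)
        ultimately show ?thesis by blast
      qed simp
    qed
    then have "span S \<subseteq> span (\<Union> (rays ?P))"
      by (metis span_insert_0 span_mono)
    then show ?thesis using cch_sub_span by blast
  qed
qed

lemma dim_submod:
  fixes X Y Z :: "(real^'n) set"
  assumes "Z \<subseteq> span X \<inter> span Y"
  shows "dim (X \<union> Y) + dim Z \<le> dim X + dim Y"
proof -
  have "dim (X \<union> Y) = dim (span (X \<union> Y))" by simp
  also have "\<dots> = dim {x + y |x y. x \<in> span X \<and> y \<in> span Y}" by (simp only: span_Un)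
  finally have "dim (X \<union> Y) = dim {x + y |x y. x \<in> span X \<and> y \<in> span Y}" .
  moreover have "dim Z \<le> dim (span X \<inter> span Y)" using assms by (rule dim_subset)
  ultimately show ?thesis using dim_sums_Int[of "span X" "span Y"] by simp
qed

lemma dim_union_card:
  fixes X :: "(real^'n) set" and Y :: "(real^'n) set set"
  assumes "finite Y" "\<forall>\<rho>\<in>Y. dim \<rho> \<le> 1"
  shows "dim (X \<union> \<Union>Y) \<le> dim X + card Y"
  using assms
proof (induction Y rule: finite_induct)
  case empty then show ?case by simp
next
  case (insert \<rho> Y)
  have "dim ((X \<union> \<Union>Y) \<union> \<rho>) + dim ({}::(real^'n) set) \<le> dim (X \<union> \<Union>Y) + dim \<rho>"
    by (rule dim_submod) simp
  moreover have "X \<union> \<Union>(insert \<rho> Y) = (X \<union> \<Union>Y) \<union> \<rho>" by blast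
  ultimately show ?case using insert by simp
qed

lemma fan_rays:
  assumes "fan \<Sigma>" "\<sigma> \<in> \<Sigma>"
  shows "finite (rays \<sigma>)" "dim \<sigma> = dim (\<Union> (rays \<sigma>))"
proof -
  have sc: "sc_rat_poly_cone \<sigma>" using assms unfolding fan_def by blast
  then have S3: "strongly_convex \<sigma>" by (simp add: sc_rat_poly_cone_def)
  obtain S where S: "finite S" "\<sigma> = convex_cone hull S"
    using sc unfolding sc_rat_poly_cone_def rat_poly_cone_def by blast
  have "rays \<sigma> \<subseteq> {F. F face_of \<sigma>}" by (auto simp: rays_def cone_face_def)
  moreover have "finite {F. F face_of \<sigma>}"
    unfolding S(2) by (rule finite_polyhedron_faces[OF polyhedron_convex_cone_hull[OF S(1)]])
  ultimately show "finite (rays \<sigma>)" by (rule finite_subset)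
  have sub: "\<Union> (rays \<sigma>) \<subseteq> \<sigma>" by (auto simp: rays_def cone_face_def dest: face_of_imp_subset)
  have "\<sigma> \<subseteq> span (\<Union> (rays \<sigma>))" using gen_by_rays[OF S(1)] S S3 by simp
  then have "dim \<sigma> \<le> dim (\<Union> (rays \<sigma>))" by (metis dim_span dim_subset)
  moreover have "dim (\<Union> (rays \<sigma>)) \<le> dim \<sigma>" using sub by (rule dim_subset)
  ultimately show "dim \<sigma> = dim (\<Union> (rays \<sigma>))" by simp
qed

lemma rays_face_sub:
  assumes "\<sigma> face_of \<tau>" shows "rays \<sigma> \<subseteq> rays \<tau>"
  using assms face_of_trans by (auto simp: rays_def cone_face_def)

lemma rays_Int:
  assumes "(\<sigma>1 \<inter> \<sigma>2) face_of \<sigma>1" "(\<sigma>1 \<inter> \<sigma>2) face_of \<sigma>2"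
  shows "rays (\<sigma>1 \<inter> \<sigma>2) = rays \<sigma>1 \<inter> rays \<sigma>2"
proof
  show "rays (\<sigma>1 \<inter> \<sigma>2) \<subseteq> rays \<sigma>1 \<inter> rays \<sigma>2"
    using rays_face_sub assms by blast
  show "rays \<sigma>1 \<inter> rays \<sigma>2 \<subseteq> rays (\<sigma>1 \<inter> \<sigma>2)"
  proof
    fix \<rho> assume "\<rho> \<in> rays \<sigma>1 \<inter> rays \<sigma>2"
    then have "\<rho> face_of \<sigma>1" "\<rho> face_of \<sigma>2" "\<rho> \<noteq> {}" "dim \<rho> = 1"
      by (auto simp: rays_def cone_face_def)
    moreover have "\<rho> face_of (\<sigma>1 \<inter> \<sigma>2)"
      by (rule face_of_subset[OF calculation(1)])
         (use face_of_imp_subset[OF calculation(1)] face_of_imp_subset[OF calculation(2)] face_of_imp_subset[OF assms(1)] in auto)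
    ultimately show "\<rho> \<in> rays (\<sigma>1 \<inter> \<sigma>2)" by (simp add: rays_def cone_face_def)
  qed
qed

theorem lemma3p3:
  fixes \<Sigma> :: "(real ^ 'n) set set"
  assumes "fan \<Sigma>" and "ns_fan \<Sigma> > 0"
    and "minimal_nonsimplicial \<Sigma> \<sigma>\<^sub>1" and "minimal_nonsimplicial \<Sigma> \<sigma>\<^sub>2"
    and "\<sigma>\<^sub>1 \<noteq> \<sigma>\<^sub>2"
  shows "\<not> (\<exists>\<tau>\<in>\<Sigma>. \<sigma>\<^sub>1 \<subseteq> \<tau> \<and> \<sigma>\<^sub>2 \<subseteq> \<tau>)"
proof
  assume "\<exists>\<tau>\<in>\<Sigma>. \<sigma>\<^sub>1 \<subseteq> \<tau> \<and> \<sigma>\<^sub>2 \<subseteq> \<tau>"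
  then obtain \<tau> where \<tau>: "\<tau> \<in> \<Sigma>" "\<sigma>\<^sub>1 \<subseteq> \<tau>" "\<sigma>\<^sub>2 \<subseteq> \<tau>" by blast
  let ?k = "ns_fan \<Sigma>"
  have fan: "finite \<Sigma>" "\<And>\<sigma>. \<sigma>\<in>\<Sigma> \<Longrightarrow> \<forall>\<tau>. cone_face \<tau> \<sigma> \<longrightarrow> \<tau> \<in> \<Sigma>"
    "\<And>\<sigma> \<tau>. \<sigma>\<in>\<Sigma> \<Longrightarrow> \<tau>\<in>\<Sigma> \<Longrightarrow> cone_face (\<sigma> \<inter> \<tau>) \<sigma> \<and> cone_face (\<sigma> \<inter> \<tau>) \<tau>"
    using assms(1) unfolding fan_def by blast+
  have s1: "\<sigma>\<^sub>1 \<in> \<Sigma>" "ns \<sigma>\<^sub>1 = ?k" "\<And>\<tau>. \<tau>\<in>\<Sigma> \<Longrightarrow> \<tau> \<subset> \<sigma>\<^sub>1 \<Longrightarrow> ns \<tau> \<noteq> ?k"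
    using assms(3) unfolding minimal_nonsimplicial_def by blast+
  have s2: "\<sigma>\<^sub>2 \<in> \<Sigma>" "ns \<sigma>\<^sub>2 = ?k" "\<And>\<tau>. \<tau>\<in>\<Sigma> \<Longrightarrow> \<tau> \<subset> \<sigma>\<^sub>2 \<Longrightarrow> ns \<tau> \<noteq> ?k"
    using assms(4) unfolding minimal_nonsimplicial_def by blast+
  have le: "ns \<sigma> \<le> ?k" if "\<sigma> \<in> \<Sigma>" for \<sigma>
    unfolding ns_fan_def using fan(1) that by (simp add: Max_ge)
  have f1: "\<sigma>\<^sub>1 face_of \<tau>" using fan(3)[OF s1(1) \<tau>(1)] \<tau>(2) by (simp add: cone_face_def Int_absorb2)
  have f2: "\<sigma>\<^sub>2 face_of \<tau>" using fan(3)[OF s2(1) \<tau>(1)] \<tau>(3) by (simp add: cone_face_def Int_absorb2)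
  let ?m = "\<sigma>\<^sub>1 \<inter> \<sigma>\<^sub>2"
  have cm: "cone_face ?m \<sigma>\<^sub>1" "cone_face ?m \<sigma>\<^sub>2" using fan(3)[OF s1(1) s2(1)] by auto
  have mS: "?m \<in> \<Sigma>" using fan(2)[OF s1(1)] cm(1) by blast
  have mpsub: "?m \<subset> \<sigma>\<^sub>2"
  proof -
    have "\<not> \<sigma>\<^sub>2 \<subset> \<sigma>\<^sub>1" using s1(3)[OF s2(1)] s2(2) by blast
    then show ?thesis using assms(5) by blast
  qed
  define A where "A = rays \<sigma>\<^sub>1"
  define B where "B = rays \<sigma>\<^sub>2"
  define C where "C = rays \<tau>"
  have fA: "finite A" and fB: "finite B" and fC: "finite C"
    using fan_rays(1)[OF assms(1)] s1(1) s2(1) \<tau>(1) by (auto simp: A_def B_def C_def)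
  have AC: "A \<subseteq> C" and BC: "B \<subseteq> C"
    using rays_face_sub f1 f2 by (auto simp: A_def B_def C_def)
  have rm: "rays ?m = A \<inter> B" unfolding A_def B_def
    by (rule rays_Int) (use cm in \<open>auto simp: cone_face_def\<close>)
  have dA: "dim \<sigma>\<^sub>1 = dim (\<Union>A)" using fan_rays(2)[OF assms(1) s1(1)] A_def by simp
  have dB: "dim \<sigma>\<^sub>2 = dim (\<Union>B)" using fan_rays(2)[OF assms(1) s2(1)] B_def by simp
  have dC: "dim \<tau> = dim (\<Union>C)" using fan_rays(2)[OF assms(1) \<tau>(1)] C_def by simp
  have dm: "dim ?m = dim (\<Union>(A \<inter> B))" using fan_rays(2)[OF assms(1) mS] rm by simp
  have dimC: "\<forall>\<rho>\<in>C. dim \<rho> \<le> 1" by (simp add: C_def rays_def)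
  have h1: "dim (\<Union>(A \<union> B)) + dim (\<Union>(A \<inter> B)) \<le> dim (\<Union>A) + dim (\<Union>B)"
  proof -
    have "\<Union>(A \<inter> B) \<subseteq> span (\<Union>A) \<inter> span (\<Union>B)" by (auto intro: span_base)
    from dim_submod[OF this] show ?thesis by (simp add: Union_Un_distrib)
  qed
  have h2: "dim (\<Union>C) \<le> dim (\<Union>(A \<union> B)) + card (C - (A \<union> B))"
  proof -
    have "\<Union>C = \<Union>(A \<union> B) \<union> \<Union>(C - (A \<union> B))" using AC BC by blast
    moreover have "dim (\<Union>(A \<union> B) \<union> \<Union>(C - (A \<union> B))) \<le> dim (\<Union>(A \<union> B)) + card (C - (A \<union> B))"
      by (rule dim_union_card) (use fC dimC in auto)
    ultimately show ?thesis by simp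
  qed
  have ABC: "A \<union> B \<subseteq> C" using AC BC by blast
  have fAB: "finite (A \<union> B)" using fA fB by blast
  have c1a: "card (C - (A \<union> B)) = card C - card (A \<union> B)" using card_Diff_subset[OF fAB ABC] .
  have c1b: "card (A \<union> B) \<le> card C" using card_mono[OF fC ABC] .
  have c1: "card C = card (A \<union> B) + card (C - (A \<union> B))" using c1a c1b by simp
  have c2: "card A + card B = card (A \<union> B) + card (A \<inter> B)" using fA fB by (rule card_Un_Int)
  have c1i: "int (card C) = int (card (A \<union> B)) + int (card (C - (A \<union> B)))" using c1 by simp
  have c2i: "int (card A) + int (card B) = int (card (A \<union> B)) + int (card (A \<inter> B))"
    using c2 by (metis of_nat_add)
  have h1i: "int (dim (\<Union>(A \<union> B))) + int (dim (\<Union>(A \<inter> B))) \<le> int (dim (\<Union>A)) + int (dim (\<Union>B))"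
    using h1 by (metis of_nat_add of_nat_le_iff)
  have h2i: "int (dim (\<Union>C)) \<le> int (dim (\<Union>(A \<union> B))) + int (card (C - (A \<union> B)))"
    using h2 by (metis of_nat_add of_nat_le_iff)
  have nt: "ns \<tau> = int (card C) - int (dim (\<Union>C))" by (simp add: ns_def C_def dC)
  have n1: "ns \<sigma>\<^sub>1 = int (card A) - int (dim (\<Union>A))" by (simp add: ns_def A_def dA)
  have n2: "ns \<sigma>\<^sub>2 = int (card B) - int (dim (\<Union>B))" by (simp add: ns_def B_def dB)
  have nm: "ns ?m = int (card (A \<inter> B)) - int (dim (\<Union>(A \<inter> B)))" by (simp add: ns_def rm dm)
  have "ns \<tau> \<le> ?k" using le \<tau>(1) .
  moreover have "ns ?m \<le> ?k" using le mS .
  moreover have "ns ?m \<ge> ns \<sigma>\<^sub>1 + ns \<sigma>\<^sub>2 - ns \<tau>"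
    unfolding nt n1 n2 nm using c1i c2i h1i h2i by linarith
  ultimately have "ns ?m = ?k" using s1(2) s2(2) by linarith
  then show False using s2(3)[OF mS mpsub] by simp
qed

end
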